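(* Let $(\frac pq,\frac rs)$ be a Farey pair of order $n$ with $q<s$, let $d=\lfloor n/q\rfloor$, $\alpha\in(0,1)$, $\beta=1-\alpha$, and $\phi_\alpha(t)=(t^q-\beta)^d-\alpha^dt^{qd-s}$. Then $\phi_\alpha$ has no multiple root lying in the set $\hat{\mathcal K}_n(q,s)$.
   Context: A matrix is stochastic if it is entrywise nonnegative with all row sums $1$; $\Theta_n$ is the set of all eigenvalues of all $n\times n$ stochastic matrices and $\partial\Theta_n$ its boundary. $\mathcal{F}_n=\{p/q:0\le p<q\le n,\ \gcd(p,q)=1\}$; a Farey pair of order $n$ is a pair $(\frac pq,\frac rs)$ of elements of $\mathcal F_n$ with $\frac pq<\frac rs$ and no element of $\mathcal F_n$ strictly between them. For such a pair, $\arg(q,s)=(\frac{2\pi p}{q},\frac{2\pi r}{s})\cup(\frac{2\pi(s-r)}{s},\frac{2\pi(q-p)}{q})$ and $\hat{\mathcal K}_n(q,s)=\{z\in\partial\Theta_n:\arg(z)\in\arg(q,s)\}$, with arguments taken in $[0,2\pi)$. *)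

theory Defs
  imports "HOL-Analysis.Analysis"
begin

text \<open>n x n real matrices are represented as functions nat \<Rightarrow> nat \<Rightarrow> real,
  only entries with indices below n are relevant.\<close>

definition stochastic :: "nat \<Rightarrow> (nat \<Rightarrow> nat \<Rightarrow> real) \<Rightarrow> bool" where
  "stochastic n A \<longleftrightarrow> (\<forall>i<n. \<forall>j<n. A i j \<ge> 0) \<and> (\<forall>i<n. (\<Sum>j<n. A i j) = 1)"

definition is_eigenvalue :: "nat \<Rightarrow> (nat \<Rightarrow> nat \<Rightarrow> real) \<Rightarrow> complex \<Rightarrow> bool" where
  "is_eigenvalue n A mu \<longleftrightarrow>
     (\<exists>v :: nat \<Rightarrow> complex. (\<exists>i<n. v i \<noteq> 0) \<and>
        (\<forall>i<n. (\<Sum>j<n. complex_of_real (A i j) * v j) = mu * v i))"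

definition Theta :: "nat \<Rightarrow> complex set" where
  "Theta n = {mu. \<exists>A. stochastic n A \<and> is_eigenvalue n A mu}"

definition in_Farey :: "nat \<Rightarrow> nat \<Rightarrow> nat \<Rightarrow> bool" where
  "in_Farey n p q \<longleftrightarrow> p < q \<and> q \<le> n \<and> coprime p q"

definition Farey_pair :: "nat \<Rightarrow> nat \<Rightarrow> nat \<Rightarrow> nat \<Rightarrow> nat \<Rightarrow> bool" where
  "Farey_pair n p q r s \<longleftrightarrow> in_Farey n p q \<and> in_Farey n r s \<and>
     real p / real q < real r / real s \<and>
     \<not> (\<exists>a b. in_Farey n a b \<and> real p / real q < real a / real b \<and> real a / real b < real r / real s)"

definition arg2pi :: "complex \<Rightarrow> real" where
  "arg2pi z = (if Arg z < 0 then Arg z + 2 * pi else Arg z)"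

definition arg_set :: "nat \<Rightarrow> nat \<Rightarrow> nat \<Rightarrow> nat \<Rightarrow> real set" where
  "arg_set p q r s = {2*pi*real p / real q <..< 2*pi*real r / real s}
      \<union> {2*pi*(real s - real r) / real s <..< 2*pi*(real q - real p) / real q}"

definition K_hat :: "nat \<Rightarrow> nat \<Rightarrow> nat \<Rightarrow> nat \<Rightarrow> nat \<Rightarrow> complex set" where
  "K_hat n p q r s = {z \<in> frontier (Theta n). arg2pi z \<in> arg_set p q r s}"

definition phi :: "nat \<Rightarrow> nat \<Rightarrow> nat \<Rightarrow> real \<Rightarrow> complex \<Rightarrow> complex" where
  "phi q s d \<alpha> t = (t ^ q - complex_of_real (1 - \<alpha>)) ^ d
      - complex_of_real (\<alpha> ^ d) * t powi (int (q * d) - int s)"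

definition multiple_root :: "(complex \<Rightarrow> complex) \<Rightarrow> complex \<Rightarrow> bool" where
  "multiple_root f z \<longleftrightarrow> f z = 0 \<and> deriv f z = 0"

end

theory Submission
  imports Defs
begin

lemma reduce_frac:
  fixes a b n :: nat
  assumes "a < b" "b \<le> n"
  shows "\<exists>a' b'. in_Farey n a' b' \<and> real a' / real b' = real a / real b"
proof -
  define g where "g = gcd a b"
  have bpos: "b > 0" using assms by simp
  have gpos: "g > 0" using bpos g_def by simp
  have ga: "a = (a div g) * g" and gb: "b = (b div g) * g" by (simp_all add: g_def)
  have cop: "coprime (a div g) (b div g)" using div_gcd_coprime[of a b] bpos g_def by simp
  have lt: "a div g < b div g" using assms(1) ga gb gpos
    by (metis mult_less_cancel2)
  have le: "b div g \<le> n" using assms(2) by (meson div_le_dividend le_trans)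
  have eq: "real (a div g) / real (b div g) = real a / real b"
  proof -
    have "real a / real b = (real (a div g) * real g) / (real (b div g) * real g)"
      by (metis ga gb of_nat_mult)
    also have "\<dots> = real (a div g) / real (b div g)" using gpos by simp
    finally show ?thesis by simp
  qed
  show ?thesis using cop lt le eq unfolding in_Farey_def by blast
qed

lemma no_between:
  assumes "Farey_pair n p q r s" "c < e" "e \<le> n"
    "real p / real q < real c / real e" "real c / real e < real r / real s"
  shows False
  using reduce_frac[OF assms(2,3)] assms(1,4,5) unfolding Farey_pair_def by metis

lemma farey_core:
  fixes a b :: int
  assumes F: "Farey_pair n p q r s" and qs: "q < s"
    and eq: "real_of_int a / (2 * real q) = real_of_int b / (2 * real s)"
    and lo: "real p / real q < real_of_int a / (2 * real q)"
    and hi: "real_of_int a / (2 * real q) < real r / real s"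
  shows False
proof -
  have pq: "p < q" "q \<le> n" and rs: "r < s" "s \<le> n"
    using F unfolding Farey_pair_def in_Farey_def by auto
  have q0: "real q > 0" and s0: "real s > 0" using pq rs by auto
  have a1r: "real_of_int a > real_of_int (2 * int p)" using lo q0 by (simp add: field_simps)
  hence a1: "a > 2 * int p" by (simp only: of_int_less_iff)
  have a2: "a = 2 * int p + 1"
  proof (rule ccontr)
    assume "a \<noteq> 2 * int p + 1"
    hence "a \<ge> 2 * int p + 2" using a1 by simp
    hence "real_of_int a \<ge> real_of_int (2 * int p + 2)" by (simp only: of_int_le_iff)
    hence "real_of_int a \<ge> 2 * real p + 2" by simp
    hence h: "real (p+1) / real q \<le> real_of_int a / (2 * real q)" using q0
    proof -
      have "real (p+1) / real q = (2 * real p + 2) / (2 * real q)" using q0 by (simp add: field_simps)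
      also have "\<dots> \<le> real_of_int a / (2 * real q)"
        by (rule divide_right_mono) (use \<open>real_of_int a \<ge> 2 * real p + 2\<close> in auto)
      finally show ?thesis .
    qed
    have "real (p+1) / real q < real r / real s" using h hi by linarith
    moreover have "real p / real q < real (p+1) / real q" using q0 by (simp add: divide_strict_right_mono)
    moreover have "p + 1 < q"
    proof -
      have "real r / real s < 1" using rs s0 by simp
      hence "real (p+1) / real q < 1" using \<open>real (p+1) / real q < real r / real s\<close> by linarith
      hence "real (p+1) < real q" using q0 by (simp add: field_simps)
      thus ?thesis by simp
    qed
    ultimately show False using no_between[OF F, of "p+1" q] pq by simp
  qed
  have b1r: "real_of_int b < real_of_int (2 * int r)" using hi eq s0 by (simp add: field_simps)
  hence b1: "b < 2 * int r" by (simp only: of_int_less_iff)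
  have r1: "r \<ge> 1"
  proof (rule ccontr)
    assume "\<not> r \<ge> 1" hence "r = 0" by simp
    moreover have "real p / real q \<ge> 0" by simp
    moreover have "real r / real s = 0" using \<open>r = 0\<close> by simp
    ultimately show False using lo hi by linarith
  qed
  have rq: "real (r-1) / real s \<le> real p / real q"
  proof (rule ccontr)
    assume "\<not> ?thesis"
    moreover have "real (r-1) / real s < real r / real s" using s0 r1
      by (simp add: divide_strict_right_mono)
    moreover have "r - 1 < s" using rs by simp
    ultimately show False using no_between[OF F, of "r-1" s] rs(2) by linarith
  qed
  have rq2: "real r * real q - real q \<le> real p * real s"
  proof -
    have "real (r-1) = real r - 1" using r1 by simp
    hence "(real r - 1) / real s \<le> real p / real q" using rq by simp
    thus ?thesis using q0 s0 by (simp add: field_simps)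
  qed
  have b2: "b = 2 * int r - 1"
  proof (rule ccontr)
    assume "b \<noteq> 2 * int r - 1"
    hence "b \<le> 2 * int r - 2" using b1 by simp
    hence "real_of_int b \<le> real_of_int (2 * int r - 2)" by (simp only: of_int_le_iff)
    hence "real_of_int b \<le> 2 * real r - 2" by simp
    moreover have "real (r-1) = real r - 1" using r1 by simp
    ultimately have "real_of_int b / (2 * real s) \<le> real (r-1) / real s" using s0
      by (simp add: field_simps)
    thus False using rq lo eq by linarith
  qed
  have "real_of_int a * real s = real_of_int b * real q" using eq q0 s0 by (simp add: field_simps)
  hence "(2 * real p + 1) * real s = (2 * real r - 1) * real q" using a2 b2 by (simp add: of_int_diff)
  hence "real s \<le> real q" using rq2 by (simp add: algebra_simps)
  thus False using qs by simp
qed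


lemma arg_mult:
  fixes z :: complex and k :: nat
  assumes "z \<noteq> 0" "Im (z ^ k) = 0"
  shows "\<exists>i::int. real k * arg2pi z = of_int i * pi"
proof -
  have "z ^ k = rcis (cmod z ^ k) (real k * Arg z)"
    using DeMoivre2[of "cmod z" "Arg z" k] rcis_cmod_Arg[of z] by simp
  hence "cmod z ^ k * sin (real k * Arg z) = 0" using assms(2) by (metis Im_rcis)
  hence "sin (real k * Arg z) = 0" using assms(1) by simp
  then obtain i :: int where i: "real k * Arg z = of_int i * pi" by (auto simp: sin_zero_iff_int2)
  show ?thesis
  proof (cases "Arg z < 0")
    case True
    hence "real k * arg2pi z = of_int (i + 2 * int k) * pi" using i
      by (simp add: arg2pi_def algebra_simps)
    thus ?thesis by blast
  next
    case False
    thus ?thesis using i by (auto simp: arg2pi_def)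
  qed
qed

lemma arg_contra:
  assumes F: "Farey_pair n p q r s" and qs: "q < s"
    and th: "\<theta> \<in> arg_set p q r s"
    and i: "real q * \<theta> = of_int i * pi" and j: "real s * \<theta> = of_int j * pi"
  shows False
proof -
  have pq: "p < q" and rs: "r < s"
    using F unfolding Farey_pair_def in_Farey_def by auto
  have q0: "real q > 0" and s0: "real s > 0" using pq rs by auto
  have ti: "\<theta> / (2*pi) = of_int i / (2 * real q)" using i q0 by (simp add: field_simps)
  have tj: "\<theta> / (2*pi) = of_int j / (2 * real s)" using j s0 by (simp add: field_simps)
  from th consider "2*pi*real p / real q < \<theta>" "\<theta> < 2*pi*real r / real s"
    | "2*pi*(real s - real r) / real s < \<theta>" "\<theta> < 2*pi*(real q - real p) / real q"
    unfolding arg_set_def by auto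
  then show False
  proof cases
    case 1
    have "real p / real q < \<theta> / (2*pi)" using 1(1) by (simp add: field_simps)
    moreover have "\<theta> / (2*pi) < real r / real s" using 1(2) by (simp add: field_simps)
    ultimately show False using farey_core[OF F qs, of i j] ti tj by simp
  next
    case 2
    have "real p / real q < 1 - \<theta> / (2*pi)" using 2(2) q0 by (simp add: field_simps)
    moreover have "1 - \<theta> / (2*pi) < real r / real s" using 2(1) s0 by (simp add: field_simps)
    moreover have "1 - \<theta> / (2*pi) = of_int (2 * int q - i) / (2 * real q)" using ti q0
      by (simp add: field_simps)
    moreover have "1 - \<theta> / (2*pi) = of_int (2 * int s - j) / (2 * real s)" using tj s0
      by (simp add: field_simps)
    ultimately show False using farey_core[OF F qs, of "2 * int q - i" "2 * int s - j"] by simp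
  qed
qed


theorem theorem4p2:
  fixes n p q r s :: nat and \<alpha> :: real
  assumes "Farey_pair n p q r s"
    and "q < s"
    and "0 < \<alpha>" and "\<alpha> < 1"
  shows "\<not> (\<exists>z \<in> K_hat n p q r s. multiple_root (phi q s (n div q) \<alpha>) z)"
proof
  assume "\<exists>z \<in> K_hat n p q r s. multiple_root (phi q s (n div q) \<alpha>) z"
  then obtain z where zK: "arg2pi z \<in> arg_set p q r s"
    and f0: "phi q s (n div q) \<alpha> z = 0" and d0: "deriv (phi q s (n div q) \<alpha>) z = 0"
    unfolding K_hat_def multiple_root_def by auto
  have F: "Farey_pair n p q r s" by fact
  have pq: "p < q" "q \<le> n" and rs: "r < s" "s \<le> n"
    using F unfolding Farey_pair_def in_Farey_def by auto
  define d where "d = n div q"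
  have d1: "d \<ge> 1" using pq unfolding d_def by (simp add: Suc_le_eq div_greater_zero_iff)
  define m where "m = int (q * d) - int s"
  define \<beta> where "\<beta> = 1 - \<alpha>"
  define A where "A = \<alpha> ^ d"
  have A0: "A > 0" using assms(3) by (simp add: A_def)
  have z0: "z \<noteq> 0"
  proof
    assume "z = 0"
    hence "arg2pi z = 0" by (simp add: arg2pi_def Arg_zero)
    moreover have "0 \<notin> arg_set p q r s"
    proof -
      have "0 \<le> 2*pi*real p / real q" by simp
      moreover have "0 < 2*pi*(real s - real r) / real s" using rs by simp
      ultimately show ?thesis unfolding arg_set_def
        by (simp only: Un_iff greaterThanLessThan_iff) linarith
    qed
    ultimately show False using zK by simp
  qed
  define w where "w = z ^ q"
  define T where "T = z powi m"
  have T0: "T \<noteq> 0" using z0 by (simp add: T_def)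
  define D where "D = of_nat d * (z ^ q - complex_of_real \<beta>) ^ (d - 1) * (of_nat q * z ^ (q - 1))
      - complex_of_real A * (of_int m * z powi (m - 1))"
  have hd: "(phi q s d \<alpha> has_field_derivative D) (at z)"
    unfolding phi_def D_def A_def \<beta>_def m_def
    by (auto intro!: derivative_eq_intros simp: z0)
  have E1: "(w - of_real \<beta>) ^ d = of_real A * T"
    using f0 unfolding phi_def w_def T_def A_def \<beta>_def m_def d_def by simp
  have E2: "of_nat d * (w - of_real \<beta>) ^ (d - 1) * (of_nat q * z ^ (q - 1)) = of_real A * (of_int m * z powi (m - 1))"
    using d0 DERIV_imp_deriv[OF hd] unfolding D_def w_def d_def by simp
  have zq: "z * z ^ (q - 1) = w" using pq unfolding w_def
    by (metis power_eq_if less_nat_zero_code neq0_conv)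
  have zm: "z * z powi (m - 1) = T" unfolding T_def using z0
    by (metis add.commute diff_add_cancel power_int_add_1')
  have wd: "(w - of_real \<beta>) * (w - of_real \<beta>) ^ (d - 1) = (w - of_real \<beta>) ^ d"
    using d1 by (metis Suc_diff_1 less_le_trans zero_less_one power_Suc)
  have "of_nat d * of_nat q * w * (w - of_real \<beta>) ^ d = of_real A * of_int m * T * (w - of_real \<beta>)"
  proof -
    have "z * (w - of_real \<beta>) * (of_nat d * (w - of_real \<beta>) ^ (d - 1) * (of_nat q * z ^ (q - 1)))
        = z * (w - of_real \<beta>) * (of_real A * (of_int m * z powi (m - 1)))" using E2 by simp
    moreover have "z * (w - of_real \<beta>) * (of_nat d * (w - of_real \<beta>) ^ (d - 1) * (of_nat q * z ^ (q - 1)))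
        = of_nat d * of_nat q * (z * z ^ (q - 1)) * ((w - of_real \<beta>) * (w - of_real \<beta>) ^ (d - 1))"
      by algebra
    moreover have "z * (w - of_real \<beta>) * (of_real A * (of_int m * z powi (m - 1)))
        = of_real A * of_int m * (z * z powi (m - 1)) * (w - of_real \<beta>)"
      by algebra
    ultimately show ?thesis by (simp only: zq zm wd)
  qed
  hence "(of_real A * T) * (of_nat d * of_nat q * w) = (of_real A * T) * (of_int m * (w - of_real \<beta>))"
    using E1 by (simp add: algebra_simps)
  hence E3: "of_nat d * of_nat q * w = of_int m * (w - of_real \<beta>)" using T0 A0 by simp
  have ms: "of_nat d * of_nat q - (of_int m :: complex) = of_nat s"
    unfolding m_def by simp
  have "w * (of_nat d * of_nat q - of_int m) = - of_int m * of_real \<beta>" using E3 by (simp add: algebra_simps)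
  hence "w * of_nat s = - of_int m * of_real \<beta>" using ms by simp
  hence wx: "w = of_real (- of_int m * \<beta> / real s)" using rs by (simp add: field_simps)
  define x where "x = - of_int m * \<beta> / real s"
  have Tx: "T = of_real ((x - \<beta>) ^ d / A)" using E1 A0 wx unfolding x_def by (simp add: field_simps)
  have "z ^ (q * d) = T * z ^ s"
  proof -
    have "z ^ (q * d) = z powi (int (q * d))" by (simp only: power_int_of_nat)
    also have "\<dots> = z powi (m + int s)" unfolding m_def by simp
    also have "\<dots> = T * z ^ s" unfolding T_def using z0 by (simp add: power_int_add)
    finally show ?thesis .
  qed
  hence "z ^ s = z ^ (q * d) / T" using T0 by (metis nonzero_mult_div_cancel_left)
  moreover have "z ^ (q * d) = of_real (x ^ d)" using wx unfolding w_def x_def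
    by (simp add: power_mult)
  ultimately have "z ^ s = of_real (x ^ d / ((x - \<beta>) ^ d / A))" using Tx by simp
  hence Is: "Im (z ^ s) = 0" by simp
  have Iq: "Im (z ^ q) = 0" using wx unfolding w_def by simp
  obtain i :: int where i: "real q * arg2pi z = of_int i * pi" using arg_mult[OF z0 Iq] by blast
  obtain j :: int where j: "real s * arg2pi z = of_int j * pi" using arg_mult[OF z0 Is] by blast
  show False using arg_contra[OF F assms(2) zK i j] .
qed

end
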